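(* Assume that for every $t\in\mathcal T$ and every $\underline\pi_t\in\times_{j\in\mathcal N}\mathcal P(\mathcal X^j)$ the fixed-point condition of the backward recursion (see context) has a solution, so that the equilibrium generating function $\theta$ and the value functions $V^i_t$ are well defined, and let $(\beta^*,\mu^* )$ be produced by the forward recursion. Then $(\beta^*,\mu^* )$ is a perfect Bayesian equilibrium. In particular, for every $i\in\mathcal N$, every $t\in\mathcal T$, every public history $a_{1:t-1}\in\mathcal A^{t-1}$, every private history $x^i_{1:t}\in(\mathcal X^i)^t$ and every (general behavioral) strategy $\beta^i$ of player $i$, $$\mathbb E^{\beta^{*,i}_{t:T}\beta^{*,-i}_{t:T},\,\mu^*_t[a_{1:t-1}]}\Big\{\sum_{n=t}^T R^i(X_n,A_n)\,\Big|\,a_{1:t-1},x^i_{1:t}\Big\}\;\ge\;\mathbb E^{\beta^{i}_{t:T}\beta^{*,-i}_{t:T},\,\mu^*_t[a_{1:t-1}]}\Big\{\sum_{n=t}^T R^i(X_n,A_n)\,\Big|\,a_{1:t-1},x^i_{1:t}\Big\}.$$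
   Context: Model: players $\mathcal N=\{1,\dots,N\}$, horizon $\mathcal T=\{1,\dots,T\}$. Player $i$ has a finite type set $\mathcal X^i$ and a finite action set $\mathcal A^i$; $\mathcal X=\times_i\mathcal X^i$, $\mathcal A=\times_i\mathcal A^i$. Types evolve as $P(x_1)=\prod_i Q^i_1(x^i_1)$ and $P(x_{t+1}\mid x_{1:t},a_{1:t})=\prod_i Q^i_{t+1}(x^i_{t+1}\mid x^i_t,a_t)$ for known kernels $Q^i_{t}$ (each kernel may depend on the full action profile $a_t$; $Q^i_{T+1}$ is an arbitrary kernel, irrelevant for rewards). Player $i$ privately observes its own types; all actions are publicly observed, so at time $t$ player $i$ knows $(a_{1:t-1},x^i_{1:t})$. A behavioral strategy of player $i$ gives $\beta^i_t(\cdot\mid a_{1:t-1},x^i_{1:t})\in\mathcal P(\mathcal A^i)$; players randomize independently given their information. Player $i$ receives reward $R^i(x_t,a_t)$ at each time $t$. Notation: $-i$ denotes all players except $i$; $\mathcal P(S)$ is the set of probability distributions on $S$. Belief update: for $\pi^i\in\mathcal P(\mathcal X^i)$, a prescription $\gamma^i:\mathcal X^i\to\mathcal P(\mathcal A^i)$ (written $\gamma^i(a^i|x^i)$), $a\in\mathcal A$ and $t\in\mathcal T$, let $\bar F_t(\pi^i,\gamma^i,a)(y)=\frac{\sum_{x}\pi^i(x)\gamma^i(a^i|x)Q^i_{t+1}(y|x,a)}{\sum_x\pi^i(x)\gamma^i(a^i|x)}$ for $y\in\mathcal X^i$ if the denominator is positive, and $\bar F_t(\pi^i,\gamma^i,a)(y)=\sum_x\pi^i(x)Q^i_{t+1}(y|x,a)$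 otherwise. For $\underline\pi=(\pi^j)_{j}$ and $\gamma=(\gamma^j)_j$, $F_t(\underline\pi,\gamma,a)=(\bar F_t(\pi^j,\gamma^j,a))_{j\in\mathcal N}$. Backward recursion: $V^i_{T+1}\equiv0$. For $t=T,\dots,1$ and each $\underline\pi_t=(\pi^j_t)_j\in\times_j\mathcal P(\mathcal X^j)$, $\theta_t[\underline\pi_t]=\tilde\gamma_t=(\tilde\gamma^j_t)_j$ (each $\tilde\gamma^j_t:\mathcal X^j\to\mathcal P(\mathcal A^j)$) is a solution of the following fixed-point condition: for every $i$ and every $x^i\in\mathcal X^i$, $\tilde\gamma^i_t(\cdot|x^i)$ maximizes over $\gamma^i(\cdot|x^i)\in\mathcal P(\mathcal A^i)$ the quantity $$W^i_t(\gamma^i(\cdot|x^i))=\sum_{x^{-i},a,y}\Big[\prod_{j\ne i}\pi^j_t(x^j)\Big]\gamma^i(a^i|x^i)\Big[\prod_{j\ne i}\tilde\gamma^j_t(a^j|x^j)\Big]Q^i_{t+1}(y|x^i,a)\Big[R^i((x^i,x^{-i}),a)+V^i_{t+1}\big(F_t(\underline\pi_t,\tilde\gamma_t,a),y\big)\Big]$$ (the belief update inside uses $\tilde\gamma_t$, not the maximization variable); $\theta_t$ selects one such solution for each $\underline\pi_t$. Then $V^i_t(\underline\pi_t,x^i)=W^i_t(\tilde\gamma^i_t(\cdot|x^i))$. Forward recursion: $\mu^{*,i}_1[\emptyset]=Q^i_1$. For $t=1,\dots,T$ and every public history: $\underline\mu^*_t[a_{1:t-1}]=(\mu^{*,j}_t[a_{1:t-1}])_j$,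 $\mu^*_t[a_{1:t-1}](x)=\prod_j\mu^{*,j}_t[a_{1:t-1}](x^j)$; $\beta^{*,i}_t(a^i_t\mid a_{1:t-1},x^i_{1:t})=\theta^i_t[\underline\mu^*_t[a_{1:t-1}]](a^i_t\mid x^i_t)$; $\mu^{*,i}_{t+1}[a_{1:t}]=\bar F_t\big(\mu^{*,i}_t[a_{1:t-1}],\theta^i_t[\underline\mu^*_t[a_{1:t-1}]],a_t\big)$. All players use the common belief $\mu^*_t[a_{1:t-1}]$; player $i$'s belief on $x^{-i}_t$ is $\prod_{j\ne i}\mu^{*,j}_t[a_{1:t-1}]$. Conditional expectation notation: for a strategy $\beta^i$ of player $i$, $\mathbb E^{\beta^i_{t:T}\beta^{*,-i}_{t:T},\,\mu^*_t[a_{1:t-1}]}\{\cdot\mid a_{1:t-1},x^i_{1:t}\}$ is the expectation under the process in which $X^i_t=x^i_t$, $X^{-i}_t\sim\prod_{j\ne i}\mu^{*,j}_t[a_{1:t-1}]$, and for $n=t,\dots,T$, given everything realized so far (public history $a_{1:n-1}$ extending the given one, private history $x^i_{1:n}$ extending the given $x^i_{1:t}$), $A^i_n\sim\beta^i_n(\cdot|a_{1:n-1},x^i_{1:n})$ and $A^j_n\sim\beta^{*,j}_n(\cdot|a_{1:n-1},X^j_n)$ independently for $j\ne i$, and $X^j_{n+1}\sim Q^j_{n+1}(\cdot|X^j_n,A_n)$ independently over $j$. *)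

theory Defs
  imports Complex_Main "HOL-Library.FuncSet"
begin

text \<open>Time runs over 1..hor G.
  Q1 G j y = Q^j_1(y);  Q G j t x a y = Q^j_t(y | x, a) for t = 2 .. hor G + 1.
  R G i x a = R^i(x, a).\<close>

record ('p, 'x, 'a) game =
  types :: "'p \<Rightarrow> 'x set"
  acts  :: "'p \<Rightarrow> 'a set"
  Q1    :: "'p \<Rightarrow> 'x \<Rightarrow> real"
  Q     :: "'p \<Rightarrow> nat \<Rightarrow> 'x \<Rightarrow> ('p \<Rightarrow> 'a) \<Rightarrow> 'x \<Rightarrow> real"
  R     :: "'p \<Rightarrow> ('p \<Rightarrow> 'x) \<Rightarrow> ('p \<Rightarrow> 'a) \<Rightarrow> real"
  hor   :: nat

definition is_dist :: "'b set \<Rightarrow> ('b \<Rightarrow> real) \<Rightarrow> bool" where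
  "is_dist S p \<longleftrightarrow> (\<forall>s\<in>S. 0 \<le> p s) \<and> sum p S = 1"

definition Xprof :: "('p, 'x, 'a, 'z) game_scheme \<Rightarrow> ('p \<Rightarrow> 'x) set" where
  "Xprof G = PiE UNIV (types G)"

definition Aprof :: "('p, 'x, 'a, 'z) game_scheme \<Rightarrow> ('p \<Rightarrow> 'a) set" where
  "Aprof G = PiE UNIV (acts G)"

definition valid_game :: "('p::finite, 'x, 'a, 'z) game_scheme \<Rightarrow> bool" where
  "valid_game G \<longleftrightarrow>
     (\<forall>j. finite (types G j) \<and> types G j \<noteq> {} \<and> finite (acts G j) \<and> acts G j \<noteq> {}) \<and>
     (\<forall>j. is_dist (types G j) (Q1 G j)) \<and>
     (\<forall>j t x a. 2 \<le> t \<and> t \<le> hor G + 1 \<and> x \<in> types G j \<and> a \<in> Aprof G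
                \<longrightarrow> is_dist (types G j) (Q G j t x a))"

definition is_belief :: "('p, 'x, 'a, 'z) game_scheme \<Rightarrow> ('p \<Rightarrow> 'x \<Rightarrow> real) \<Rightarrow> bool" where
  "is_belief G \<pi> \<longleftrightarrow> (\<forall>j. is_dist (types G j) (\<pi> j))"

definition is_presc :: "('p, 'x, 'a, 'z) game_scheme \<Rightarrow> ('p \<Rightarrow> 'x \<Rightarrow> 'a \<Rightarrow> real) \<Rightarrow> bool" where
  "is_presc G \<gamma> \<longleftrightarrow> (\<forall>j. \<forall>x\<in>types G j. is_dist (acts G j) (\<gamma> j x))"

definition Fbar :: "('p, 'x, 'a, 'z) game_scheme \<Rightarrow> 'p \<Rightarrow> nat \<Rightarrow> ('x \<Rightarrow> real)
                    \<Rightarrow> ('x \<Rightarrow> 'a \<Rightarrow> real) \<Rightarrow> ('p \<Rightarrow> 'a) \<Rightarrow> 'x \<Rightarrow> real" where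
  "Fbar G j t p g a = (\<lambda>y.
     (let den = (\<Sum>x\<in>types G j. p x * g x (a j)) in
      if den > 0 then (\<Sum>x\<in>types G j. p x * g x (a j) * Q G j (t+1) x a y) / den
      else (\<Sum>x\<in>types G j. p x * Q G j (t+1) x a y)))"

definition F :: "('p, 'x, 'a, 'z) game_scheme \<Rightarrow> nat \<Rightarrow> ('p \<Rightarrow> 'x \<Rightarrow> real)
                 \<Rightarrow> ('p \<Rightarrow> 'x \<Rightarrow> 'a \<Rightarrow> real) \<Rightarrow> ('p \<Rightarrow> 'a) \<Rightarrow> 'p \<Rightarrow> 'x \<Rightarrow> real" where
  "F G t \<pi> \<gamma> a = (\<lambda>j. Fbar G j t (\<pi> j) (\<gamma> j) a)"

text \<open>W^i_t(d) for the belief profile pi, the candidate solution gamma~ (tgam),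
  the next value function Vn = V_{t+1}, player i with type xi, and d in P(A^i).\<close>
definition Wt :: "('p::finite, 'x, 'a, 'z) game_scheme \<Rightarrow> nat
                   \<Rightarrow> ('p \<Rightarrow> ('p \<Rightarrow> 'x \<Rightarrow> real) \<Rightarrow> 'x \<Rightarrow> real)
                   \<Rightarrow> ('p \<Rightarrow> 'x \<Rightarrow> real) \<Rightarrow> ('p \<Rightarrow> 'x \<Rightarrow> 'a \<Rightarrow> real)
                   \<Rightarrow> 'p \<Rightarrow> 'x \<Rightarrow> ('a \<Rightarrow> real) \<Rightarrow> real" where
  "Wt G t Vn \<pi> tgam i xi d =
     (\<Sum>x\<in>{x\<in>Xprof G. x i = xi}. \<Sum>a\<in>Aprof G. \<Sum>y\<in>types G i.
        (\<Prod>j\<in>UNIV-{i}. \<pi> j (x j)) * d (a i) * (\<Prod>j\<in>UNIV-{i}. tgam j (x j) (a j))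
        * Q G i (t+1) xi a y * (R G i x a + Vn i (F G t \<pi> tgam a) y))"

definition is_fp :: "('p::finite, 'x, 'a, 'z) game_scheme \<Rightarrow> nat
                   \<Rightarrow> ('p \<Rightarrow> ('p \<Rightarrow> 'x \<Rightarrow> real) \<Rightarrow> 'x \<Rightarrow> real)
                   \<Rightarrow> ('p \<Rightarrow> 'x \<Rightarrow> real) \<Rightarrow> ('p \<Rightarrow> 'x \<Rightarrow> 'a \<Rightarrow> real) \<Rightarrow> bool" where
  "is_fp G t Vn \<pi> tgam \<longleftrightarrow> is_presc G tgam \<and>
     (\<forall>i. \<forall>xi\<in>types G i. \<forall>d. is_dist (acts G i) d \<longrightarrow>
        Wt G t Vn \<pi> tgam i xi d \<le> Wt G t Vn \<pi> tgam i xi (tgam i xi))"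

text \<open>Value functions from the equilibrium generating function theta:
  Vrem G theta m = V_{T+1-m}.\<close>
primrec Vrem :: "('p::finite, 'x, 'a, 'z) game_scheme
                 \<Rightarrow> (nat \<Rightarrow> ('p \<Rightarrow> 'x \<Rightarrow> real) \<Rightarrow> ('p \<Rightarrow> 'x \<Rightarrow> 'a \<Rightarrow> real))
                 \<Rightarrow> nat \<Rightarrow> 'p \<Rightarrow> ('p \<Rightarrow> 'x \<Rightarrow> real) \<Rightarrow> 'x \<Rightarrow> real" where
  "Vrem G \<theta> 0 = (\<lambda>i \<pi> x. 0)"
| "Vrem G \<theta> (Suc m) = (\<lambda>i \<pi> x.
      Wt G (hor G - m) (Vrem G \<theta> m) \<pi> (\<theta> (hor G - m) \<pi>) i x (\<theta> (hor G - m) \<pi> i x))"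

definition Vt :: "('p::finite, 'x, 'a, 'z) game_scheme
                 \<Rightarrow> (nat \<Rightarrow> ('p \<Rightarrow> 'x \<Rightarrow> real) \<Rightarrow> ('p \<Rightarrow> 'x \<Rightarrow> 'a \<Rightarrow> real))
                 \<Rightarrow> nat \<Rightarrow> 'p \<Rightarrow> ('p \<Rightarrow> 'x \<Rightarrow> real) \<Rightarrow> 'x \<Rightarrow> real" where
  "Vt G \<theta> t = Vrem G \<theta> (hor G + 1 - t)"

definition is_egf :: "('p::finite, 'x, 'a, 'z) game_scheme
                 \<Rightarrow> (nat \<Rightarrow> ('p \<Rightarrow> 'x \<Rightarrow> real) \<Rightarrow> ('p \<Rightarrow> 'x \<Rightarrow> 'a \<Rightarrow> real)) \<Rightarrow> bool" where
  "is_egf G \<theta> \<longleftrightarrow> (\<forall>t\<in>{1..hor G}. \<forall>\<pi>. is_belief G \<pi> \<longrightarrow>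
       is_fp G t (Vt G \<theta> (t+1)) \<pi> (\<theta> t \<pi>))"

text \<open>Forward recursion for the common belief mu*_t[a_{1:t-1}]
  (computed on the reversed public history).\<close>
primrec murev :: "('p, 'x, 'a, 'z) game_scheme
                 \<Rightarrow> (nat \<Rightarrow> ('p \<Rightarrow> 'x \<Rightarrow> real) \<Rightarrow> ('p \<Rightarrow> 'x \<Rightarrow> 'a \<Rightarrow> real))
                 \<Rightarrow> ('p \<Rightarrow> 'a) list \<Rightarrow> 'p \<Rightarrow> 'x \<Rightarrow> real" where
  "murev G \<theta> [] = Q1 G"
| "murev G \<theta> (a # rh) =
     F G (length rh + 1) (murev G \<theta> rh) (\<theta> (length rh + 1) (murev G \<theta> rh)) a"

definition mu_star :: "('p, 'x, 'a, 'z) game_scheme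
                 \<Rightarrow> (nat \<Rightarrow> ('p \<Rightarrow> 'x \<Rightarrow> real) \<Rightarrow> ('p \<Rightarrow> 'x \<Rightarrow> 'a \<Rightarrow> real))
                 \<Rightarrow> ('p \<Rightarrow> 'a) list \<Rightarrow> 'p \<Rightarrow> 'x \<Rightarrow> real" where
  "mu_star G \<theta> h = murev G \<theta> (rev h)"

definition beta_star :: "('p, 'x, 'a, 'z) game_scheme
                 \<Rightarrow> (nat \<Rightarrow> ('p \<Rightarrow> 'x \<Rightarrow> real) \<Rightarrow> ('p \<Rightarrow> 'x \<Rightarrow> 'a \<Rightarrow> real))
                 \<Rightarrow> 'p \<Rightarrow> nat \<Rightarrow> ('p \<Rightarrow> 'a) list \<Rightarrow> 'x list \<Rightarrow> 'a \<Rightarrow> real" where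
  "beta_star G \<theta> j t h xh = \<theta> t (mu_star G \<theta> h) j (last xh)"

definition is_strategy :: "('p::finite, 'x, 'a, 'z) game_scheme \<Rightarrow> 'p
                 \<Rightarrow> (nat \<Rightarrow> ('p \<Rightarrow> 'a) list \<Rightarrow> 'x list \<Rightarrow> 'a \<Rightarrow> real) \<Rightarrow> bool" where
  "is_strategy G i bi \<longleftrightarrow> (\<forall>n h xh. 1 \<le> n \<and> n \<le> hor G \<and> length h = n - 1 \<and> set h \<subseteq> Aprof G
       \<and> length xh = n \<and> set xh \<subseteq> types G i \<longrightarrow> is_dist (acts G i) (bi n h xh))"

text \<open>State at time n: public history h = a_{1:n-1},
  player i's private history xh = x^i_{1:n}, current type profile x (with x i = last xh).
  Jrem ... m n ... with m = T + 1 - n remaining stages.\<close>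
primrec Jrem :: "('p::finite, 'x, 'a, 'z) game_scheme \<Rightarrow> 'p
                 \<Rightarrow> (nat \<Rightarrow> ('p \<Rightarrow> 'a) list \<Rightarrow> 'x list \<Rightarrow> 'a \<Rightarrow> real)
                 \<Rightarrow> (nat \<Rightarrow> ('p \<Rightarrow> 'a) list \<Rightarrow> 'p \<Rightarrow> 'x \<Rightarrow> 'a \<Rightarrow> real)
                 \<Rightarrow> nat \<Rightarrow> nat \<Rightarrow> ('p \<Rightarrow> 'a) list \<Rightarrow> 'x list \<Rightarrow> ('p \<Rightarrow> 'x) \<Rightarrow> real" where
  "Jrem G i bi bo 0 n h xh x = 0"
| "Jrem G i bi bo (Suc m) n h xh x =
     (\<Sum>a\<in>Aprof G. (bi n h xh (a i) * (\<Prod>j\<in>UNIV-{i}. bo n h j (x j) (a j))) *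
        (R G i x a + (\<Sum>y\<in>Xprof G. (\<Prod>j\<in>UNIV. Q G j (n+1) (x j) a (y j))
                                    * Jrem G i bi bo m (n+1) (h @ [a]) (xh @ [y i]) y)))"

text \<open>E^{bi, bo, mu}{ sum_{n=t}^T R^i(X_n,A_n) | a_{1:t-1}, x^i_{1:t} } where
  X^{-i}_t ~ prod_{j<>i} mu j.\<close>
definition cond_exp :: "('p::finite, 'x, 'a, 'z) game_scheme \<Rightarrow> 'p
                 \<Rightarrow> (nat \<Rightarrow> ('p \<Rightarrow> 'a) list \<Rightarrow> 'x list \<Rightarrow> 'a \<Rightarrow> real)
                 \<Rightarrow> (nat \<Rightarrow> ('p \<Rightarrow> 'a) list \<Rightarrow> 'p \<Rightarrow> 'x \<Rightarrow> 'a \<Rightarrow> real)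
                 \<Rightarrow> ('p \<Rightarrow> 'x \<Rightarrow> real)
                 \<Rightarrow> nat \<Rightarrow> ('p \<Rightarrow> 'a) list \<Rightarrow> 'x list \<Rightarrow> real" where
  "cond_exp G i bi bo mu t h xh =
     (\<Sum>x\<in>{x\<in>Xprof G. x i = last xh}. (\<Prod>j\<in>UNIV-{i}. mu j (x j))
        * Jrem G i bi bo (hor G + 1 - t) t h xh x)"

end

theory Submission
  imports Defs
begin

lemma sum_fix_prod:
  fixes T :: "'p::finite \<Rightarrow> 'x set" and g :: "'p \<Rightarrow> 'x \<Rightarrow> real"
  assumes fin: "\<And>j. finite (T j)" and xi: "xi \<in> T i"
  shows "(\<Sum>x\<in>{x\<in>PiE UNIV T. x i = xi}. \<Prod>j\<in>UNIV-{i}. g j (x j)) = (\<Prod>j\<in>UNIV-{i}. \<Sum>z\<in>T j. g j z)"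
proof -
  define T' where "T' = T(i:={xi})"
  define g' where "g' = (\<lambda>j z. if j = i then 1 else g j z)"
  have S: "{x\<in>PiE UNIV T. x i = xi} = PiE UNIV T'"
    using xi by (auto simp: T'_def PiE_iff split: if_splits; metis)
  have P: "(\<Prod>j\<in>UNIV. g' j (x j)) = (\<Prod>j\<in>UNIV-{i}. g j (x j))" for x
    by (subst prod.remove[of UNIV i]) (auto simp: g'_def intro!: prod.cong)
  have "(\<Prod>j\<in>UNIV. \<Sum>z\<in>T' j. g' j z) = (\<Sum>x\<in>PiE UNIV T'. \<Prod>j\<in>UNIV. g' j (x j))"
    by (rule prod_sum_PiE) (auto simp: T'_def fin)
  moreover have "(\<Prod>j\<in>UNIV. \<Sum>z\<in>T' j. g' j z) = (\<Prod>j\<in>UNIV-{i}. \<Sum>z\<in>T j. g j z)"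
    by (subst prod.remove[of UNIV i]) (auto simp: g'_def T'_def intro!: prod.cong sum.cong)
  ultimately show ?thesis using S P by simp
qed

lemma Fbar_mul:
  fixes G :: "('p::finite,'x,'a) game"
  assumes nn: "\<And>z. z \<in> types G j \<Longrightarrow> 0 \<le> p z * g z (a j)"
    and fin: "finite (types G j)"
  shows "(\<Sum>z\<in>types G j. p z * g z (a j) * Q G j (n+1) z a y)
         = (\<Sum>z\<in>types G j. p z * g z (a j)) * Fbar G j n p g a y"
proof (cases "(\<Sum>z\<in>types G j. p z * g z (a j)) > 0")
  case True
  then show ?thesis by (simp add: Fbar_def Let_def)
next
  case False
  have "(\<Sum>z\<in>types G j. p z * g z (a j)) \<ge> 0" using nn by (simp add: sum_nonneg)
  with False have z: "(\<Sum>z\<in>types G j. p z * g z (a j)) = 0" by simp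
  hence "\<forall>z\<in>types G j. p z * g z (a j) = 0" using sum_nonneg_eq_0_iff[OF fin, of "\<lambda>z. p z * g z (a j)"] nn by simp
  hence "(\<Sum>z\<in>types G j. p z * g z (a j) * Q G j (n+1) z a y) = 0"
    by (intro sum.neutral) auto
  with z show ?thesis by simp
qed

lemma Fbar_dist:
  fixes G :: "('p::finite,'x,'a) game"
  assumes p: "is_dist (types G j) p"
    and g: "\<And>z. z \<in> types G j \<Longrightarrow> 0 \<le> g z (a j)"
    and fin: "finite (types G j)"
    and Qd: "\<And>z. z \<in> types G j \<Longrightarrow> is_dist (types G j) (Q G j (n+1) z a)"
  shows "is_dist (types G j) (Fbar G j n p g a)"
proof -
  have pn: "\<And>z. z \<in> types G j \<Longrightarrow> 0 \<le> p z" using p by (simp add: is_dist_def)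
  have Qn: "\<And>z y. z \<in> types G j \<Longrightarrow> y \<in> types G j \<Longrightarrow> 0 \<le> Q G j (n+1) z a y"
    using Qd by (simp add: is_dist_def)
  have Qs: "\<And>z. z \<in> types G j \<Longrightarrow> (\<Sum>y\<in>types G j. Q G j (n+1) z a y) = 1"
    using Qd by (simp add: is_dist_def)
  show ?thesis
  proof (cases "(\<Sum>z\<in>types G j. p z * g z (a j)) > 0")
    case True
    let ?d = "(\<Sum>z\<in>types G j. p z * g z (a j))"
    have "(\<Sum>y\<in>types G j. \<Sum>z\<in>types G j. p z * g z (a j) * Q G j (n+1) z a y)
        = (\<Sum>z\<in>types G j. p z * g z (a j) * (\<Sum>y\<in>types G j. Q G j (n+1) z a y))"
      by (subst sum.swap) (simp add: sum_distrib_left)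
    also have "\<dots> = ?d" using Qs by simp
    finally have s: "(\<Sum>y\<in>types G j. \<Sum>z\<in>types G j. p z * g z (a j) * Q G j (n+1) z a y) = ?d" .
    have "(\<Sum>y\<in>types G j. Fbar G j n p g a y)
       = (\<Sum>y\<in>types G j. (\<Sum>z\<in>types G j. p z * g z (a j) * Q G j (n+1) z a y) / ?d)"
      using True by (simp add: Fbar_def Let_def)
    also have "\<dots> = 1" using s True by (simp add: sum_divide_distrib[symmetric])
    moreover have "\<forall>y\<in>types G j. 0 \<le> Fbar G j n p g a y"
    proof
      fix y assume "y \<in> types G j"
      hence "0 \<le> (\<Sum>z\<in>types G j. p z * g z (a j) * Q G j (n+1) z a y)"
        using pn g Qn by (intro sum_nonneg mult_nonneg_nonneg) auto
      thus "0 \<le> Fbar G j n p g a y" using True by (simp add: Fbar_def Let_def)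
    qed
    ultimately show ?thesis by (simp add: is_dist_def)
  next
    case False
    have "(\<Sum>y\<in>types G j. \<Sum>z\<in>types G j. p z * Q G j (n+1) z a y)
        = (\<Sum>z\<in>types G j. p z * (\<Sum>y\<in>types G j. Q G j (n+1) z a y))"
      by (subst sum.swap) (simp add: sum_distrib_left)
    also have "\<dots> = 1" using Qs p by (simp add: is_dist_def)
    finally have s2: "(\<Sum>y\<in>types G j. \<Sum>z\<in>types G j. p z * Q G j (n+1) z a y) = 1" .
    have "(\<Sum>y\<in>types G j. Fbar G j n p g a y) = (\<Sum>y\<in>types G j. \<Sum>z\<in>types G j. p z * Q G j (n+1) z a y)"
      using False by (simp add: Fbar_def Let_def)
    hence "(\<Sum>y\<in>types G j. Fbar G j n p g a y) = 1" using s2 by simp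
    moreover have "\<forall>y\<in>types G j. 0 \<le> Fbar G j n p g a y"
    proof
      fix y assume "y \<in> types G j"
      hence "0 \<le> (\<Sum>z\<in>types G j. p z * Q G j (n+1) z a y)"
        using pn Qn by (intro sum_nonneg mult_nonneg_nonneg) auto
      thus "0 \<le> Fbar G j n p g a y" using False by (simp add: Fbar_def Let_def)
    qed
    ultimately show ?thesis by (simp add: is_dist_def)
  qed
qed

definition Cg :: "('p::finite,'x,'a) game \<Rightarrow> 'p \<Rightarrow> ('p \<Rightarrow> 'x \<Rightarrow> real) \<Rightarrow> ('p \<Rightarrow> 'x \<Rightarrow> 'a \<Rightarrow> real) \<Rightarrow> 'x \<Rightarrow> ('p \<Rightarrow> 'a) \<Rightarrow> real" where
  "Cg G i \<pi> \<gamma> xi a = (\<Sum>x\<in>{x\<in>Xprof G. x i = xi}. (\<Prod>j\<in>UNIV-{i}. \<pi> j (x j)) * (\<Prod>j\<in>UNIV-{i}. \<gamma> j (x j) (a j)) * R G i x a)"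

definition Dg :: "('p::finite,'x,'a) game \<Rightarrow> 'p \<Rightarrow> ('p \<Rightarrow> 'x \<Rightarrow> real) \<Rightarrow> ('p \<Rightarrow> 'x \<Rightarrow> 'a \<Rightarrow> real) \<Rightarrow> ('p \<Rightarrow> 'a) \<Rightarrow> real" where
  "Dg G i \<pi> \<gamma> a = (\<Prod>j\<in>UNIV-{i}. \<Sum>z\<in>types G j. \<pi> j z * \<gamma> j z (a j))"

lemma PG_sum:
  fixes G :: "('p::finite,'x,'a) game"
  assumes fin: "\<And>j. finite (types G j)" and xi: "xi \<in> types G i"
  shows "(\<Sum>x\<in>{x\<in>Xprof G. x i = xi}. (\<Prod>j\<in>UNIV-{i}. \<pi> j (x j)) * (\<Prod>j\<in>UNIV-{i}. \<gamma> j (x j) (a j)))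
        = Dg G i \<pi> \<gamma> a"
proof -
  have "(\<Sum>x\<in>{x\<in>Xprof G. x i = xi}. (\<Prod>j\<in>UNIV-{i}. \<pi> j (x j)) * (\<Prod>j\<in>UNIV-{i}. \<gamma> j (x j) (a j)))
      = (\<Sum>x\<in>{x\<in>PiE UNIV (types G). x i = xi}. \<Prod>j\<in>UNIV-{i}. (\<lambda>j z. \<pi> j z * \<gamma> j z (a j)) j (x j))"
    by (simp add: Xprof_def prod.distrib)
  also have "\<dots> = Dg G i \<pi> \<gamma> a"
    unfolding Dg_def by (rule sum_fix_prod[of "types G", OF fin xi])
  finally show ?thesis .
qed

lemma sum_aux: "(\<Sum>x\<in>S. d*(A x) + d*(B x)*c) = d*(\<Sum>x\<in>S. A x) + d*(\<Sum>x\<in>S. B x)*(c::real)"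
  by (simp add: sum.distrib sum_distrib_left sum_distrib_right)

lemma Wt_expand:
  fixes G :: "('p::finite,'x,'a) game"
  assumes fin: "\<And>j. finite (types G j)" and xi: "xi \<in> types G i"
    and Qs: "\<And>a. a \<in> Aprof G \<Longrightarrow> (\<Sum>y\<in>types G i. Q G i (n+1) xi a y) = 1"
  shows "Wt G n Vn \<pi> \<gamma> i xi d = (\<Sum>a\<in>Aprof G. d (a i) * (Cg G i \<pi> \<gamma> xi a
           + Dg G i \<pi> \<gamma> a * (\<Sum>y\<in>types G i. Q G i (n+1) xi a y * Vn i (F G n \<pi> \<gamma> a) y)))"
proof -
  have Qs': "\<And>a. a \<in> Aprof G \<Longrightarrow> sum (Q G i (Suc n) xi a) (types G i) = 1" using Qs by simp
  let ?S = "{x\<in>Xprof G. x i = xi}"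
  let ?P = "\<lambda>x. \<Prod>j\<in>UNIV-{i}. \<pi> j (x j)"
  let ?Ga = "\<lambda>x a. \<Prod>j\<in>UNIV-{i}. \<gamma> j (x j) (a j)"
  let ?Sa = "\<lambda>a. \<Sum>y\<in>types G i. Q G i (n+1) xi a y * Vn i (F G n \<pi> \<gamma> a) y"
  have inner: "(\<Sum>y\<in>types G i. ?P x * d (a i) * ?Ga x a * Q G i (n+1) xi a y * (R G i x a + Vn i (F G n \<pi> \<gamma> a) y))
      = d (a i) * (?P x * ?Ga x a * R G i x a) * (\<Sum>y\<in>types G i. Q G i (n+1) xi a y) + d (a i) * (?P x * ?Ga x a) * ?Sa a"
    for x a
  proof -
    have "(\<Sum>y\<in>types G i. ?P x * d (a i) * ?Ga x a * Q G i (n+1) xi a y * (R G i x a + Vn i (F G n \<pi> \<gamma> a) y))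
      = (\<Sum>y\<in>types G i. (d (a i) * (?P x * ?Ga x a * R G i x a)) * Q G i (n+1) xi a y + (d (a i) * (?P x * ?Ga x a)) * (Q G i (n+1) xi a y * Vn i (F G n \<pi> \<gamma> a) y))"
      by (intro sum.cong refl) (simp add: algebra_simps)
    also have "\<dots> = d (a i) * (?P x * ?Ga x a * R G i x a) * (\<Sum>y\<in>types G i. Q G i (n+1) xi a y) + d (a i) * (?P x * ?Ga x a) * ?Sa a"
      by (simp only: sum.distrib sum_distrib_left)
    finally show ?thesis .
  qed
  have "Wt G n Vn \<pi> \<gamma> i xi d = (\<Sum>x\<in>?S. \<Sum>a\<in>Aprof G. d (a i) * (?P x * ?Ga x a * R G i x a) + d (a i) * (?P x * ?Ga x a) * ?Sa a)"
    unfolding Wt_def by (intro sum.cong refl) (subst inner, simp add: Qs')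
  also have "\<dots> = (\<Sum>a\<in>Aprof G. \<Sum>x\<in>?S. d (a i) * (?P x * ?Ga x a * R G i x a) + d (a i) * (?P x * ?Ga x a) * ?Sa a)"
    by (rule sum.swap)
  also have "\<dots> = (\<Sum>a\<in>Aprof G. d (a i) * Cg G i \<pi> \<gamma> xi a + d (a i) * (\<Sum>x\<in>?S. ?P x * ?Ga x a) * ?Sa a)"
    unfolding Cg_def by (intro sum.cong refl) (rule sum_aux)
  also have "\<dots> = (\<Sum>a\<in>Aprof G. d (a i) * (Cg G i \<pi> \<gamma> xi a + Dg G i \<pi> \<gamma> a * ?Sa a))"
    by (simp add: PG_sum[OF fin xi] algebra_simps)
  finally show ?thesis .
qed

definition Eb :: "('p::finite,'x,'a) game \<Rightarrow> (nat \<Rightarrow> ('p \<Rightarrow> 'x \<Rightarrow> real) \<Rightarrow> ('p \<Rightarrow> 'x \<Rightarrow> 'a \<Rightarrow> real))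
   \<Rightarrow> 'p \<Rightarrow> (nat \<Rightarrow> ('p \<Rightarrow> 'a) list \<Rightarrow> 'x list \<Rightarrow> 'a \<Rightarrow> real) \<Rightarrow> nat \<Rightarrow> nat \<Rightarrow> ('p \<Rightarrow> 'a) list \<Rightarrow> 'x list \<Rightarrow> real" where
  "Eb G \<theta> i bi m n h xh = (\<Sum>x\<in>{x\<in>Xprof G. x i = last xh}. (\<Prod>j\<in>UNIV-{i}. mu_star G \<theta> h j (x j))
      * Jrem G i bi (\<lambda>n h' j x. \<theta> n (mu_star G \<theta> h') j x) m n h xh x)"

lemma aux2: "p * (\<Sum>a\<in>A. (b a * g a) * (r a + t a)) = (\<Sum>a\<in>A. b a * (p * g a * r a) + b a * (p * g a * t a))"
  for p :: real
  by (simp add: sum_distrib_left algebra_simps)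

lemma aux3: "(\<Sum>x\<in>S. b * A x + b * B x) = b * ((\<Sum>x\<in>S. A x) + (\<Sum>x\<in>S. B x))" for b :: real
  by (simp add: sum.distrib sum_distrib_left algebra_simps)

lemma finite_Xprof:
  fixes G :: "('p::finite,'x,'a) game"
  shows "(\<And>j. finite (types G j)) \<Longrightarrow> finite (Xprof G)"
  unfolding Xprof_def by (rule finite_PiE) auto

lemma mu_snoc: "mu_star G \<theta> (h @ [a]) = F G (length h + 1) (mu_star G \<theta> h) (\<theta> (length h + 1) (mu_star G \<theta> h)) a"
  by (simp add: mu_star_def)

lemma E_expand:
  fixes G :: "('p::finite,'x,'a) game"
  assumes fin: "\<And>j. finite (types G j)" and xi: "last xh \<in> types G i"
    and nnm: "\<And>j z. z \<in> types G j \<Longrightarrow> 0 \<le> mu_star G \<theta> h j z"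
    and nng: "\<And>j z b. z \<in> types G j \<Longrightarrow> b \<in> acts G j \<Longrightarrow> 0 \<le> \<theta> n (mu_star G \<theta> h) j z b"
    and len: "length h + 1 = n"
  shows "Eb G \<theta> i bi (Suc m) n h xh = (\<Sum>a\<in>Aprof G. bi n h xh (a i) *
     (Cg G i (mu_star G \<theta> h) (\<theta> n (mu_star G \<theta> h)) (last xh) a
      + Dg G i (mu_star G \<theta> h) (\<theta> n (mu_star G \<theta> h)) a *
        (\<Sum>yi\<in>types G i. Q G i (n+1) (last xh) a yi * Eb G \<theta> i bi m (n+1) (h@[a]) (xh@[yi]))))"
proof -
  define \<mu> where "\<mu> = mu_star G \<theta> h"
  define \<gamma> where "\<gamma> = \<theta> n \<mu>"
  define xi where "xi = last xh"
  define bo where "bo = (\<lambda>n h' j x. \<theta> n (mu_star G \<theta> h') j x)"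
  let ?S = "{x\<in>Xprof G. x i = xi}"
  let ?P = "\<lambda>x. \<Prod>j\<in>UNIV-{i}. \<mu> j (x j)"
  let ?Ga = "\<lambda>x a. \<Prod>j\<in>UNIV-{i}. \<gamma> j (x j) (a j)"
  let ?K = "\<lambda>x a y. \<Prod>j\<in>UNIV. Q G j (n+1) (x j) a (y j)"
  let ?J = "\<lambda>a y. Jrem G i bi bo m (n+1) (h @ [a]) (xh @ [y i]) y"
  let ?T = "\<lambda>x a. \<Sum>y\<in>Xprof G. ?K x a y * ?J a y"
  have xi': "xi \<in> types G i" using xi by (simp add: xi_def)
  have s1: "Eb G \<theta> i bi (Suc m) n h xh = (\<Sum>x\<in>?S. \<Sum>a\<in>Aprof G. bi n h xh (a i) * (?P x * ?Ga x a * R G i x a)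
                + bi n h xh (a i) * (?P x * ?Ga x a * ?T x a))"
    unfolding Eb_def Jrem.simps \<mu>_def[symmetric] \<gamma>_def[symmetric] xi_def[symmetric] bo_def[symmetric]
    by (intro sum.cong refl) (simp only: aux2 bo_def \<gamma>_def \<mu>_def)
  also have "\<dots> = (\<Sum>a\<in>Aprof G. \<Sum>x\<in>?S. bi n h xh (a i) * (?P x * ?Ga x a * R G i x a)
                + bi n h xh (a i) * (?P x * ?Ga x a * ?T x a))"
    by (rule sum.swap)
  also have "\<dots> = (\<Sum>a\<in>Aprof G. bi n h xh (a i) * (Cg G i \<mu> \<gamma> xi a + (\<Sum>x\<in>?S. ?P x * ?Ga x a * ?T x a)))"
    unfolding Cg_def by (intro sum.cong refl) (rule aux3)
  also have "\<dots> = (\<Sum>a\<in>Aprof G. bi n h xh (a i) * (Cg G i \<mu> \<gamma> xi a + Dg G i \<mu> \<gamma> a *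
          (\<Sum>yi\<in>types G i. Q G i (n+1) xi a yi * Eb G \<theta> i bi m (n+1) (h@[a]) (xh@[yi]))))"
  proof (intro sum.cong refl arg_cong2[where f="(*)"] arg_cong2[where f="(+)"])
    fix a assume a: "a \<in> Aprof G"
    have aj: "a j \<in> acts G j" for j using a by (auto simp: Aprof_def PiE_iff)
    have "(\<Sum>x\<in>?S. ?P x * ?Ga x a * ?T x a) = (\<Sum>x\<in>?S. \<Sum>y\<in>Xprof G. (?P x * ?Ga x a * ?K x a y) * ?J a y)"
      by (simp add: sum_distrib_left mult.assoc)
    also have "\<dots> = (\<Sum>y\<in>Xprof G. \<Sum>x\<in>?S. (?P x * ?Ga x a * ?K x a y) * ?J a y)"
      by (rule sum.swap)
    also have "\<dots> = (\<Sum>y\<in>Xprof G. (\<Sum>x\<in>?S. ?P x * ?Ga x a * ?K x a y) * ?J a y)"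
      by (simp add: sum_distrib_right)
    also have "\<dots> = (\<Sum>y\<in>Xprof G. (Q G i (n+1) xi a (y i) * (Dg G i \<mu> \<gamma> a * (\<Prod>j\<in>UNIV-{i}. F G n \<mu> \<gamma> a j (y j)))) * ?J a y)"
    proof (intro sum.cong refl arg_cong2[where f="(*)"])
      fix y
      have e1: "?P x * ?Ga x a * ?K x a y = Q G i (n+1) xi a (y i) *
           (\<Prod>j\<in>UNIV-{i}. (\<lambda>j z. \<mu> j z * \<gamma> j z (a j) * Q G j (n+1) z a (y j)) j (x j))"
        if "x \<in> ?S" for x
        using that by (subst prod.remove[of UNIV i]) (simp_all add: prod.distrib)
      have "(\<Sum>x\<in>?S. ?P x * ?Ga x a * ?K x a y) = Q G i (n+1) xi a (y i) *
           (\<Sum>x\<in>{x\<in>PiE UNIV (types G). x i = xi}. \<Prod>j\<in>UNIV-{i}. (\<lambda>j z. \<mu> j z * \<gamma> j z (a j) * Q G j (n+1) z a (y j)) j (x j))"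
        using e1 by (simp add: sum_distrib_left Xprof_def)
      also have "\<dots> = Q G i (n+1) xi a (y i) * (\<Prod>j\<in>UNIV-{i}. \<Sum>z\<in>types G j. \<mu> j z * \<gamma> j z (a j) * Q G j (n+1) z a (y j))"
        by (subst sum_fix_prod[of "types G", OF fin xi']) (rule refl)
      also have "\<dots> = Q G i (n+1) xi a (y i) * (\<Prod>j\<in>UNIV-{i}. (\<Sum>z\<in>types G j. \<mu> j z * \<gamma> j z (a j)) * Fbar G j n (\<mu> j) (\<gamma> j) a (y j))"
        using Fbar_mul[OF _ fin] nnm nng aj by (simp add: \<mu>_def \<gamma>_def)
      also have "\<dots> = Q G i (n+1) xi a (y i) * (Dg G i \<mu> \<gamma> a * (\<Prod>j\<in>UNIV-{i}. F G n \<mu> \<gamma> a j (y j)))"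
        by (simp add: prod.distrib Dg_def F_def)
      finally show "(\<Sum>x\<in>?S. ?P x * ?Ga x a * ?K x a y) = Q G i (n+1) xi a (y i) * (Dg G i \<mu> \<gamma> a * (\<Prod>j\<in>UNIV-{i}. F G n \<mu> \<gamma> a j (y j)))" .
    qed
    also have "\<dots> = Dg G i \<mu> \<gamma> a * (\<Sum>y\<in>Xprof G. Q G i (n+1) xi a (y i) * ((\<Prod>j\<in>UNIV-{i}. F G n \<mu> \<gamma> a j (y j)) * ?J a y))"
      by (simp add: sum_distrib_left algebra_simps)
    also have "\<dots> = Dg G i \<mu> \<gamma> a * (\<Sum>yi\<in>types G i. \<Sum>y\<in>{y. y \<in> Xprof G \<and> y i = yi}. Q G i (n+1) xi a (y i) * ((\<Prod>j\<in>UNIV-{i}. F G n \<mu> \<gamma> a j (y j)) * ?J a y))"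
      by (subst sum.group[OF finite_Xprof[OF fin] fin[of i], of "\<lambda>y. y i", symmetric]) (auto simp: Xprof_def PiE_iff)
    also have "\<dots> = Dg G i \<mu> \<gamma> a * (\<Sum>yi\<in>types G i. Q G i (n+1) xi a yi * Eb G \<theta> i bi m (n+1) (h@[a]) (xh@[yi]))"
      unfolding Eb_def using len
      by (simp add: sum_distrib_left mu_snoc bo_def \<mu>_def \<gamma>_def)
    finally show "(\<Sum>x\<in>?S. ?P x * ?Ga x a * ?T x a) = Dg G i \<mu> \<gamma> a * (\<Sum>yi\<in>types G i. Q G i (n+1) xi a yi * Eb G \<theta> i bi m (n+1) (h@[a]) (xh@[yi]))" .
  qed
  finally show ?thesis by (simp add: \<mu>_def \<gamma>_def xi_def)
qed

lemma mu_belief: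
  fixes G :: "('p::finite,'x,'a) game"
  assumes vg: "valid_game G" and egf: "is_egf G \<theta>"
  shows "length h \<le> hor G \<Longrightarrow> set h \<subseteq> Aprof G \<Longrightarrow> is_belief G (mu_star G \<theta> h)"
proof (induction h rule: rev_induct)
  case Nil
  then show ?case using vg by (simp add: mu_star_def is_belief_def valid_game_def)
next
  case (snoc a h)
  let ?n = "length h + 1"
  have bel: "is_belief G (mu_star G \<theta> h)" using snoc by simp
  have n: "?n \<in> {1..hor G}" using snoc.prems by simp
  have fp: "is_fp G ?n (Vt G \<theta> (?n+1)) (mu_star G \<theta> h) (\<theta> ?n (mu_star G \<theta> h))"
    using egf bel n unfolding is_egf_def by blast
  hence pr: "is_presc G (\<theta> ?n (mu_star G \<theta> h))" by (simp add: is_fp_def)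
  have a: "a \<in> Aprof G" using snoc.prems by simp
  have aj: "a j \<in> acts G j" for j using a by (auto simp: Aprof_def PiE_iff)
  show ?case
    unfolding mu_snoc is_belief_def F_def
  proof
    fix j
    show "is_dist (types G j) (Fbar G j ?n (mu_star G \<theta> h j) (\<theta> ?n (mu_star G \<theta> h) j) a)"
    proof (rule Fbar_dist)
      show "is_dist (types G j) (mu_star G \<theta> h j)" using bel by (simp add: is_belief_def)
      show "\<And>z. z \<in> types G j \<Longrightarrow> 0 \<le> \<theta> ?n (mu_star G \<theta> h) j z (a j)"
        using pr aj by (simp add: is_presc_def is_dist_def)
      show "finite (types G j)" using vg by (simp add: valid_game_def)
      show "\<And>z. z \<in> types G j \<Longrightarrow> is_dist (types G j) (Q G j (?n+1) z a)"
        using vg a n unfolding valid_game_def by auto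
    qed
  qed
qed

lemma step_facts:
  fixes G :: "('p::finite,'x,'a) game"
  assumes vg: "valid_game G" and egf: "is_egf G \<theta>"
    and n: "1 \<le> n" "n \<le> hor G" and len: "length h = n - 1" and hA: "set h \<subseteq> Aprof G"
  shows "is_belief G (mu_star G \<theta> h)"
    and "is_fp G n (Vt G \<theta> (n+1)) (mu_star G \<theta> h) (\<theta> n (mu_star G \<theta> h))"
proof -
  show bel: "is_belief G (mu_star G \<theta> h)" using mu_belief[OF vg egf] len n hA by simp
  show "is_fp G n (Vt G \<theta> (n+1)) (mu_star G \<theta> h) (\<theta> n (mu_star G \<theta> h))"
    using egf bel n unfolding is_egf_def by auto
qed

lemma main_both:
  fixes G :: "('p::finite,'x,'a) game"
  assumes vg: "valid_game G" and egf: "is_egf G \<theta>" and strat: "is_strategy G i bi"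
  shows "n + m = hor G + 1 \<Longrightarrow> 1 \<le> n \<Longrightarrow> length h = n - 1 \<Longrightarrow> set h \<subseteq> Aprof G
    \<Longrightarrow> length xh = n \<Longrightarrow> set xh \<subseteq> types G i
    \<Longrightarrow> Eb G \<theta> i bi m n h xh \<le> Vrem G \<theta> m i (mu_star G \<theta> h) (last xh)
      \<and> Eb G \<theta> i (beta_star G \<theta> i) m n h xh = Vrem G \<theta> m i (mu_star G \<theta> h) (last xh)"
proof (induction m arbitrary: n h xh)
  case 0
  then show ?case by (simp add: Eb_def)
next
  case (Suc m)
  have n: "1 \<le> n" "n \<le> hor G" using Suc.prems by auto
  define \<mu> where "\<mu> = mu_star G \<theta> h"
  define \<gamma> where "\<gamma> = \<theta> n \<mu>"
  define xi where "xi = last xh"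
  have fin: "\<And>j. finite (types G j)" using vg by (simp add: valid_game_def)
  have xi: "xi \<in> types G i" using Suc.prems n unfolding xi_def
    by (metis last_in_set list.size(3) not_one_le_zero subsetD)
  have bel: "is_belief G \<mu>" and fp: "is_fp G n (Vt G \<theta> (n+1)) \<mu> \<gamma>"
    using step_facts[OF vg egf n Suc.prems(3,4)] by (simp_all add: \<mu>_def \<gamma>_def)
  have hm: "hor G - n = m" using Suc.prems(1) by simp
  have hm2: "hor G - m = n" using Suc.prems(1) by simp
  have Vt_eq: "Vt G \<theta> (n+1) = Vrem G \<theta> m" using hm by (simp add: Vt_def)
  have Vs: "Vrem G \<theta> (Suc m) i \<mu> xi = Wt G n (Vrem G \<theta> m) \<mu> \<gamma> i xi (\<gamma> i xi)"
    using hm2 by (simp add: \<gamma>_def)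
  have pr: "is_presc G \<gamma>" using fp by (simp add: is_fp_def)
  have nnm: "\<And>j z. z \<in> types G j \<Longrightarrow> 0 \<le> \<mu> j z" using bel by (simp add: is_belief_def is_dist_def)
  have nng: "\<And>j z b. z \<in> types G j \<Longrightarrow> b \<in> acts G j \<Longrightarrow> 0 \<le> \<gamma> j z b"
    using pr by (simp add: is_presc_def is_dist_def)
  have len: "length h + 1 = n" using Suc.prems n by simp
  have Qd: "\<And>a. a \<in> Aprof G \<Longrightarrow> is_dist (types G i) (Q G i (n+1) xi a)"
    using vg xi n unfolding valid_game_def by auto
  have Qs: "\<And>a. a \<in> Aprof G \<Longrightarrow> (\<Sum>y\<in>types G i. Q G i (n+1) xi a y) = 1"
    using Qd by (simp add: is_dist_def)
  have Dn: "\<And>a. a \<in> Aprof G \<Longrightarrow> 0 \<le> Dg G i \<mu> \<gamma> a"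
    unfolding Dg_def
    by (intro prod_nonneg sum_nonneg mult_nonneg_nonneg nnm nng) (auto simp: Aprof_def PiE_iff)
  have muF: "mu_star G \<theta> (h @ [a]) = F G n \<mu> \<gamma> a" for a
    using len by (simp add: mu_snoc \<mu>_def \<gamma>_def)
  have IH: "Eb G \<theta> i bi m (n+1) (h@[a]) (xh@[yi]) \<le> Vrem G \<theta> m i (F G n \<mu> \<gamma> a) yi
      \<and> Eb G \<theta> i (beta_star G \<theta> i) m (n+1) (h@[a]) (xh@[yi]) = Vrem G \<theta> m i (F G n \<mu> \<gamma> a) yi"
    if "a \<in> Aprof G" "yi \<in> types G i" for a yi
    using Suc.IH[of "n+1" "h@[a]" "xh@[yi]"] Suc.prems that n by (simp add: muF)
  have WE: "Wt G n (Vrem G \<theta> m) \<mu> \<gamma> i xi d = (\<Sum>a\<in>Aprof G. d (a i) * (Cg G i \<mu> \<gamma> xi a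
           + Dg G i \<mu> \<gamma> a * (\<Sum>y\<in>types G i. Q G i (n+1) xi a y * Vrem G \<theta> m i (F G n \<mu> \<gamma> a) y)))" for d
    by (rule Wt_expand[OF fin xi Qs])
  have EE: "Eb G \<theta> i b (Suc m) n h xh = (\<Sum>a\<in>Aprof G. b n h xh (a i) * (Cg G i \<mu> \<gamma> xi a
      + Dg G i \<mu> \<gamma> a * (\<Sum>yi\<in>types G i. Q G i (n+1) xi a yi * Eb G \<theta> i b m (n+1) (h@[a]) (xh@[yi]))))" for b
    using E_expand[OF fin _ _ _ len, of xh i \<theta> b m] xi nnm nng by (simp add: \<mu>_def \<gamma>_def xi_def)
  have bd: "is_dist (acts G i) (bi n h xh)" using strat Suc.prems n unfolding is_strategy_def by auto
  have "Eb G \<theta> i bi (Suc m) n h xh \<le> (\<Sum>a\<in>Aprof G. bi n h xh (a i) * (Cg G i \<mu> \<gamma> xi a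
           + Dg G i \<mu> \<gamma> a * (\<Sum>y\<in>types G i. Q G i (n+1) xi a y * Vrem G \<theta> m i (F G n \<mu> \<gamma> a) y)))"
    unfolding EE
  proof (intro sum_mono mult_left_mono add_left_mono sum_mono)
    fix a y assume a: "a \<in> Aprof G" and y: "y \<in> types G i"
    show "Eb G \<theta> i bi m (n + 1) (h @ [a]) (xh @ [y]) \<le> Vrem G \<theta> m i (F G n \<mu> \<gamma> a) y"
      using IH[OF a y] by simp
    show "0 \<le> Q G i (n + 1) xi a y" using Qd[OF a] y by (simp add: is_dist_def)
  next
    fix a assume a: "a \<in> Aprof G"
    show "0 \<le> Dg G i \<mu> \<gamma> a" by (rule Dn[OF a])
    show "0 \<le> bi n h xh (a i)" using bd a by (auto simp: is_dist_def Aprof_def PiE_iff)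
  qed
  also have "\<dots> = Wt G n (Vrem G \<theta> m) \<mu> \<gamma> i xi (bi n h xh)" by (rule WE[symmetric])
  also have "\<dots> \<le> Wt G n (Vrem G \<theta> m) \<mu> \<gamma> i xi (\<gamma> i xi)"
    using fp bd xi Vt_eq by (simp add: is_fp_def)
  also have "\<dots> = Vrem G \<theta> (Suc m) i \<mu> xi" by (rule Vs[symmetric])
  finally have le: "Eb G \<theta> i bi (Suc m) n h xh \<le> Vrem G \<theta> (Suc m) i \<mu> xi" .
  have bs: "beta_star G \<theta> i n h xh = \<gamma> i xi" by (simp add: beta_star_def \<gamma>_def \<mu>_def xi_def)
  have "Eb G \<theta> i (beta_star G \<theta> i) (Suc m) n h xh = (\<Sum>a\<in>Aprof G. \<gamma> i xi (a i) * (Cg G i \<mu> \<gamma> xi a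
           + Dg G i \<mu> \<gamma> a * (\<Sum>y\<in>types G i. Q G i (n+1) xi a y * Vrem G \<theta> m i (F G n \<mu> \<gamma> a) y)))"
    unfolding EE bs using IH by (intro sum.cong refl arg_cong2[where f="(*)"] arg_cong2[where f="(+)"]) auto
  also have "\<dots> = Vrem G \<theta> (Suc m) i \<mu> xi" using Vs WE by simp
  finally show ?case using le by (simp add: \<mu>_def xi_def)
qed

theorem theorem1:
  fixes G :: "('p::finite, 'x, 'a) game"
    and \<theta> :: "nat \<Rightarrow> ('p \<Rightarrow> 'x \<Rightarrow> real) \<Rightarrow> ('p \<Rightarrow> 'x \<Rightarrow> 'a \<Rightarrow> real)"
    and i :: 'p and t :: nat
    and h :: "('p \<Rightarrow> 'a) list" and xh :: "'x list"
    and bi :: "nat \<Rightarrow> ('p \<Rightarrow> 'a) list \<Rightarrow> 'x list \<Rightarrow> 'a \<Rightarrow> real"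
  assumes "valid_game G"
    and "is_egf G \<theta>"
    and "1 \<le> t" and "t \<le> hor G"
    and "length h = t - 1" and "set h \<subseteq> Aprof G"
    and "length xh = t" and "set xh \<subseteq> types G i"
    and "is_strategy G i bi"
  shows "cond_exp G i (beta_star G \<theta> i) (\<lambda>n h' j x. \<theta> n (mu_star G \<theta> h') j x)
            (mu_star G \<theta> h) t h xh
         \<ge> cond_exp G i bi (\<lambda>n h' j x. \<theta> n (mu_star G \<theta> h') j x)
            (mu_star G \<theta> h) t h xh"
proof -
  have ce: "cond_exp G i b (\<lambda>n h' j x. \<theta> n (mu_star G \<theta> h') j x) (mu_star G \<theta> h) t h xh
        = Eb G \<theta> i b (hor G + 1 - t) t h xh" for b
    by (simp add: cond_exp_def Eb_def)
  have "Eb G \<theta> i bi (hor G + 1 - t) t h xh \<le> Vrem G \<theta> (hor G + 1 - t) i (mu_star G \<theta> h) (last xh)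
      \<and> Eb G \<theta> i (beta_star G \<theta> i) (hor G + 1 - t) t h xh = Vrem G \<theta> (hor G + 1 - t) i (mu_star G \<theta> h) (last xh)"
    using main_both[OF assms(1,2,9)] assms by simp
  thus ?thesis by (simp add: ce)
qed

end
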